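(* Let $u=q/p$ and $v=s/r$ be positive rational numbers written in lowest terms, and let $\mathcal{T}_{u,v}$ be the triangle with vertices $(0,0)$, $(p/q,0)$ and $(0,r/s)$. If \[ s\mid p,\quad p\mid (rq+1),\quad \gcd\!\left(\frac{rq+1}{p},s\right)=1 \] and \[ q\mid r,\quad r\mid (sp+1),\quad \gcd\!\left(\frac{sp+1}{r},q\right)=1, \] then $\mathcal{T}_{u,v}$ is pseudo-integral, i.e. $t\mapsto \#(t\mathcal{T}_{u,v}\cap\mathbb{Z}^2)$ is a polynomial in the positive integer $t$. *)

theory Defs
  imports "HOL-Analysis.Analysis" "HOL-Computational_Algebra.Polynomial"
begin

definition triangle_T :: "nat \<Rightarrow> nat \<Rightarrow> nat \<Rightarrow> nat \<Rightarrow> (real \<times> real) set" where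
  "triangle_T p q r s = convex hull {(0, 0), (real p / real q, 0), (0, real r / real s)}"

definition lattice_count :: "(real \<times> real) set \<Rightarrow> nat \<Rightarrow> nat" where
  "lattice_count P t = card {z :: int \<times> int. (real_of_int (fst z), real_of_int (snd z)) \<in> (\<lambda>x. real t *\<^sub>R x) ` P}"

definition pseudo_integral :: "(real \<times> real) set \<Rightarrow> bool" where
  "pseudo_integral P \<longleftrightarrow> (\<exists>f :: real poly. \<forall>t::nat. t > 0 \<longrightarrow> real (lattice_count P t) = poly f (real t))"

end

theory Submission imports Defs begin

definition fc :: "nat \<Rightarrow> nat \<Rightarrow> nat \<Rightarrow> nat" where
  "fc A B N = card {(x::nat,y::nat). A*x + B*y \<le> N}"

lemma fc_finite:
  assumes "A > 0" "B > 0"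
  shows "finite {(x::nat,y::nat). A*x + B*y \<le> N}"
proof -
  have "{(x::nat,y::nat). A*x + B*y \<le> N} \<subseteq> {..N} \<times> {..N}"
  proof -
    have *: "x \<le> N \<and> y \<le> N" if h: "A*x + B*y \<le> N" for x y :: nat
    proof -
      have "x \<le> A*x" using assms by (cases A) auto
      also have "A*x \<le> A*x + B*y" by (rule le_add1)
      finally have 1: "x \<le> N" using h by (rule order_trans)
      have "y \<le> B*y" using assms by (cases B) auto
      also have "B*y \<le> A*x + B*y" by (rule le_add2)
      finally have "y \<le> N" using h by (rule order_trans)
      with 1 show ?thesis by simp
    qed
    show ?thesis
    proof (rule subsetI)
      fix z assume "z \<in> {(x::nat,y::nat). A*x + B*y \<le> N}"
      then obtain x y where z: "z = (x,y)" and h: "A*x + B*y \<le> N" by blast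
      from * [OF h] z show "z \<in> {..N} \<times> {..N}" by simp
    qed
  qed
  then show ?thesis by (rule finite_subset) auto
qed

lemma fc_swap: "fc A B N = fc B A N"
proof -
  have "{(x::nat,y::nat). B*x + A*y \<le> N} = prod.swap ` {(x::nat,y::nat). A*x + B*y \<le> N}"
    by (auto simp: image_iff add.commute)
  then show ?thesis unfolding fc_def by (simp add: card_image)
qed

lemma fc_zero: assumes "A > 0" "B > 0" shows "fc A B 0 = 1"
proof -
  have "{(x::nat,y::nat). A*x + B*y \<le> 0} = {(0,0)}" using assms by auto
  then show ?thesis unfolding fc_def by simp
qed

lemma fc_step:
  assumes "A > 0" "B > 0"
  shows "fc A B (N + A) = fc A B N + (N + A) div B + 1"
proof -
  let ?S = "{(x::nat,y::nat). A*x + B*y \<le> N}"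
  have eq: "{(x::nat,y::nat). A*x + B*y \<le> N + A} =
      (\<lambda>y. (0,y)) ` {..(N+A) div B} \<union> (\<lambda>(x,y). (Suc x, y)) ` ?S"
  proof -
    have *: "(x,y) \<in> {(x::nat,y::nat). A*x + B*y \<le> N + A} \<longleftrightarrow> (x,y) \<in> (\<lambda>y. (0,y)) ` {..(N+A) div B} \<union> (\<lambda>(x,y). (Suc x, y)) ` ?S"
      for x y :: nat
    proof (cases x)
      case 0
      have "B*y \<le> N + A \<longleftrightarrow> y \<le> (N+A) div B"
        using assms by (simp add: less_eq_div_iff_mult_less_eq mult.commute)
      then show ?thesis using 0 by (auto simp: image_iff)
    next
      case (Suc x')
      then show ?thesis by (auto simp: image_iff)
    qed
    show ?thesis
    proof (rule set_eqI)
      fix z :: "nat \<times> nat"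
      obtain x y where z: "z = (x,y)" by (cases z)
      show "z \<in> {(x::nat,y::nat). A*x + B*y \<le> N + A} \<longleftrightarrow> z \<in> (\<lambda>y. (0,y)) ` {..(N+A) div B} \<union> (\<lambda>(x,y). (Suc x, y)) ` ?S"
        unfolding z by (rule *)
    qed
  qed
  have d: "(\<lambda>y. (0,y)) ` {..(N+A) div B} \<inter> (\<lambda>(x,y). (Suc x, y)) ` ?S = {}" by auto
  have i1: "inj_on (\<lambda>y::nat. (0::nat,y)) {..(N+A) div B}" by (auto simp: inj_on_def)
  have i2: "inj_on (\<lambda>(x,y). (Suc x, y::nat)) ?S" by (auto simp: inj_on_def)
  show ?thesis unfolding fc_def eq
    using fc_finite[OF assms, of N] d
    by (subst card_Un_disjoint) (auto simp: card_image[OF i1] card_image[OF i2])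
qed

definition Dv :: "nat \<Rightarrow> nat \<Rightarrow> nat \<Rightarrow> int" where
  "Dv A B N = 2*int A*int B*int (fc A B N) - int N*(int N + int A + int B + 1) - 2*int A*int B"

lemma Dv_swap: "Dv A B N = Dv B A N"
  by (simp add: Dv_def fc_swap[of A B] algebra_simps)

lemma Dv_step:
  assumes "A > 0" "B > 0"
  shows "Dv A B (N + A) = Dv A B N + int A * (int B - 1 - 2 * int ((N+A) mod B))"
proof -
  define d where "d = (N + A) div B"
  define m where "m = (N + A) mod B"
  have "N + A = B * d + m" unfolding d_def m_def by simp
  then have "int N + int A = int B * int d + int m" by (metis of_nat_add of_nat_mult)
  then have eq: "int N = int B * int d + int m - int A" by linarith
  show ?thesis unfolding Dv_def fc_step[OF assms] d_def[symmetric] m_def[symmetric]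
    by (simp add: eq algebra_simps)
qed

lemma Dv_iter:
  assumes "A > 0" "B > 0"
  shows "Dv A B (N + n*A) = Dv A B N + int A * (\<Sum>u\<in>{1..n}. int B - 1 - 2 * int ((N + u*A) mod B))"
proof (induction n)
  case 0
  then show ?case by simp
next
  case (Suc n)
  have e: "N + n*A + A = N + Suc n * A" by simp
  have "Dv A B (N + Suc n * A) = Dv A B (N + n*A) + int A * (int B - 1 - 2 * int ((N + Suc n * A) mod B))"
    using Dv_step[OF assms, of "N + n*A"] unfolding e .
  then show ?case using Suc by (simp add: algebra_simps)
qed

lemma res_perm:
  fixes k s c :: nat
  assumes "coprime k s" "s > 0"
  shows "(\<Sum>i<s. (c + i*k) mod s) = (\<Sum>j<s. j)"
proof -
  let ?h = "\<lambda>i::nat. (c + i*k) mod s"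
  have inj: "inj_on ?h {..<s}"
  proof (rule inj_onI)
    fix i j assume i: "i \<in> {..<s}" and j: "j \<in> {..<s}" and e: "?h i = ?h j"
    have "int ((c + i*k) mod s) = int ((c + j*k) mod s)" using e by simp
    then have "(int c + int i * int k) mod int s = (int c + int j * int k) mod int s"
      by (simp add: zmod_int)
    then have "int s dvd (int c + int i * int k) - (int c + int j * int k)"
      by (simp add: mod_eq_dvd_iff)
    then have "int s dvd (int i - int j) * int k" by (simp add: algebra_simps)
    moreover have cp: "coprime (int s) (int k)" using assms by (simp add: coprime_commute)
    ultimately have dv: "int s dvd (int i - int j)" using coprime_dvd_mult_left_iff[OF cp] by simp
    have ab: "\<bar>int i - int j\<bar> < int s" using i j by auto
    have "int i - int j = 0"
    proof (rule ccontr)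
      assume "int i - int j \<noteq> 0"
      from dvd_imp_le_int[OF this dv] ab show False by simp
    qed
    then show "i = j" by simp
  qed
  have sub: "?h ` {..<s} \<subseteq> {..<s}" using assms by auto
  have img: "?h ` {..<s} = {..<s}"
    using endo_inj_surj[OF finite_lessThan sub inj] .
  have "(\<Sum>j<s. j) = (\<Sum>j\<in>?h ` {..<s}. j)" using img by simp
  also have "\<dots> = (\<Sum>i<s. ?h i)" by (subst sum.reindex[OF inj]) simp
  finally show ?thesis by simp
qed

lemma sum_split_nat: "(\<Sum>i<n+m::nat. f i) = (\<Sum>i<n. f i) + (\<Sum>j<m. f (n+j))"
  by (induction m) (simp_all add: algebra_simps)

lemma gauss2: "2 * (\<Sum>j<n. j) = n * (n - 1::nat)"
proof (induction n)
  case 0 then show ?case by simp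
next
  case (Suc n) then show ?case by (cases n) (auto simp: algebra_simps)
qed

lemma res_sum:
  fixes k s c a :: nat
  assumes "coprime k s" "s > 0"
  shows "2 * (\<Sum>i<s*a. (c + i*k) mod s) = a * s * (s - 1)"
proof (induction a)
  case 0
  then show ?case by simp
next
  case (Suc a)
  have blk: "(\<Sum>j<s. (c + (s*a + j)*k) mod s) = (\<Sum>j<s. j)"
  proof -
    have "(c + (s*a + j)*k) mod s = (c + j*k) mod s" for j
    proof -
      have "c + (s*a + j)*k = (c + j*k) + s*(a*k)" by (simp add: algebra_simps)
      then show ?thesis by (simp only: mod_mult_self2)
    qed
    then show ?thesis using res_perm[OF assms, of c] by simp
  qed
  have sa: "s * Suc a = s*a + s" by simp
  have "2 * (\<Sum>i<s * Suc a. (c + i*k) mod s) = 2 * (\<Sum>i<s*a. (c + i*k) mod s) + 2 * (\<Sum>j<s. j)"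
    unfolding sa sum_split_nat[of "\<lambda>i. (c + i*k) mod s" "s*a" s] blk by simp
  also have "\<dots> = a * s * (s - 1) + s * (s - 1)" using Suc gauss2[of s] by simp
  finally show ?case by (simp add: algebra_simps)
qed

lemma block:
  fixes A k p s t r :: nat
  assumes "A + 1 = k*p" "s dvd p" "coprime k s" "p > 0" "s > 0"
  shows "2 * (\<Sum>u\<in>{1..p}. (t*p*r + u*A) mod (s*p)) = p*(s*p - 1)"
proof -
  have k1: "k \<ge> 1" using assms(1) by (cases k) auto
  obtain a where pa: "p = s*a" using assms(2) by blast
  define c where "c = t*r + (k - 1)"
  have val: "(t*p*r + Suc i*A) mod (s*p) = p*((c + i*k) mod s) + (p - Suc i)" if i: "i < p" for i
  proof -
    define x where "x = c + i*k"
    have "int (t*p*r + Suc i*A) = int (p*x + (p - Suc i))"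
    proof -
      have "int (A + 1) = int (k*p)" using assms(1) by (simp only:)
      then have iA: "int A = int k * int p - 1" by simp
      have X: "int x = int t * int r + int k - 1 + int i * int k" unfolding x_def c_def using k1 by simp
      have PX: "int p * int x = int t*int r*int p + int k*int p - int p + int i*int k*int p"
        unfolding X by (simp add: algebra_simps)
      have L: "int (t*p*r + Suc i*A) = int t*int p*int r + (int i + 1)*(int k*int p - 1)"
        by (simp add: iA algebra_simps)
      have R: "int (p*x + (p - Suc i)) = int p * int x + int p - int i - 1" using i by simp
      show ?thesis unfolding L R PX by (simp add: algebra_simps)
    qed
    then have e1: "t*p*r + Suc i*A = p*x + (p - Suc i)" by (simp only: of_nat_eq_iff)
    have "p*x = s*p*(x div s) + p*(x mod s)"
      by (metis add.commute div_mult_mod_eq mult.assoc mult.commute distrib_left)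
    with e1 have e2: "t*p*r + Suc i*A = s*p*(x div s) + (p*(x mod s) + (p - Suc i))" by simp
    have "x mod s < s" using assms(5) by simp
    then have "x mod s \<le> s - 1" by simp
    then have "p*(x mod s) \<le> p*(s-1)" by simp
    moreover have "p*(s-1) + p = s*p" using assms(5) by (cases s) (auto simp: algebra_simps)
    ultimately have lt: "p*(x mod s) + (p - Suc i) < s*p" using i by linarith
    show ?thesis unfolding e2 x_def[symmetric] using lt by simp
  qed
  have "(\<Sum>u\<in>{1..p}. (t*p*r + u*A) mod (s*p)) = (\<Sum>i<p. (t*p*r + Suc i*A) mod (s*p))"
  proof -
    have "{1..p} = Suc ` {..<p}"
      using atLeast1_atMost_eq_remove0 lessThan_Suc_atMost image_Suc_lessThan by auto
    then show ?thesis by (simp add: sum.reindex)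
  qed
  also have "\<dots> = (\<Sum>i<p. p*((c + i*k) mod s) + (p - Suc i))" using val by simp
  also have "\<dots> = (\<Sum>i<p. p*((c + i*k) mod s)) + (\<Sum>i<p. p - Suc i)"
    by (rule sum.distrib)
  also have "(\<Sum>i<p. p - Suc i) = (\<Sum>i<p. i)"
    using sum.nat_diff_reindex[of "\<lambda>i. i" p] by simp
  also have "(\<Sum>i<p. p*((c + i*k) mod s)) = p * (\<Sum>i<p. (c + i*k) mod s)"
    by (simp add: sum_distrib_left)
  finally have S: "(\<Sum>u\<in>{1..p}. (t*p*r + u*A) mod (s*p)) = p * (\<Sum>i<p. (c + i*k) mod s) + (\<Sum>i<p. i)" .
  have R: "2 * (\<Sum>i<p. (c + i*k) mod s) = a * s * (s - 1)" using res_sum[OF assms(3,5), of c a] pa by simp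
  have "2 * (\<Sum>u\<in>{1..p}. (t*p*r + u*A) mod (s*p)) = p * (a * s * (s - 1)) + p*(p-1)"
    unfolding S using R gauss2[of p] by (simp add: algebra_simps)
  also have "\<dots> = p*(s*p - 1)"
  proof -
    have "a * s * (s - 1) + (p - 1) = s*p - 1" using pa assms(4,5)
      by (cases s; cases a) (auto simp: algebra_simps)
    then show ?thesis by (metis distrib_left)
  qed
  finally show ?thesis .
qed

lemma tri_eq:
  "triangle_T p q r s = {(u * (real p / real q), v * (real r / real s)) | u v. 0 \<le> u \<and> 0 \<le> v \<and> u + v \<le> 1}"
  unfolding triangle_T_def convex_hull_3_alt by (simp add: scaleR_prod_def zero_prod_def)

lemma mem_scaled:
  fixes X Y :: real
  assumes "p > 0" "q > 0" "r > 0" "s > 0" "t > 0"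
  shows "(X, Y) \<in> (\<lambda>x. real t *\<^sub>R x) ` triangle_T p q r s \<longleftrightarrow>
         X \<ge> 0 \<and> Y \<ge> 0 \<and> X * (real q * real r) + Y * (real s * real p) \<le> real t * (real p * real r)"
proof
  assume "(X, Y) \<in> (\<lambda>x. real t *\<^sub>R x) ` triangle_T p q r s"
  then obtain u v where uv: "0 \<le> u" "0 \<le> v" "u + v \<le> 1"
    and X: "X = real t * (u * (real p / real q))" and Y: "Y = real t * (v * (real r / real s))"
    unfolding tri_eq by auto
  have "X * (real q * real r) + Y * (real s * real p) = real t * (real p * real r) * (u + v)"
    unfolding X Y using assms by (simp add: field_simps)
  also have "\<dots> \<le> real t * (real p * real r)" using uv assms by (simp add: mult_left_le)
  finally show "X \<ge> 0 \<and> Y \<ge> 0 \<and> X * (real q * real r) + Y * (real s * real p) \<le> real t * (real p * real r)"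
    using uv X Y assms by simp
next
  assume h: "X \<ge> 0 \<and> Y \<ge> 0 \<and> X * (real q * real r) + Y * (real s * real p) \<le> real t * (real p * real r)"
  define u where "u = X * real q / (real t * real p)"
  define v where "v = Y * real s / (real t * real r)"
  have u0: "0 \<le> u" and v0: "0 \<le> v" using h assms unfolding u_def v_def by auto
  have "u + v = (X * (real q * real r) + Y * (real s * real p)) / (real t * (real p * real r))"
    unfolding u_def v_def using assms by (simp add: field_simps)
  also have "\<dots> \<le> 1" using h assms by (simp add: divide_le_eq_1)
  finally have uv: "u + v \<le> 1" .
  have "X = real t * (u * (real p / real q))" "Y = real t * (v * (real r / real s))"
    unfolding u_def v_def using assms by (simp_all add: field_simps)
  then have "(X, Y) = real t *\<^sub>R (u * (real p / real q), v * (real r / real s))" by simp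
  moreover have "(u * (real p / real q), v * (real r / real s)) \<in> triangle_T p q r s"
    unfolding tri_eq using u0 v0 uv by blast
  ultimately show "(X, Y) \<in> (\<lambda>x. real t *\<^sub>R x) ` triangle_T p q r s" by blast
qed

lemma lc_eq:
  assumes "p > 0" "q > 0" "r > 0" "s > 0" "t > 0"
  shows "lattice_count (triangle_T p q r s) t = fc (q*r) (s*p) (t*(p*r))"
proof -
  let ?S = "{(x::nat,y::nat). q*r*x + s*p*y \<le> t*(p*r)}"
  have eq: "{z :: int \<times> int. (real_of_int (fst z), real_of_int (snd z)) \<in> (\<lambda>x. real t *\<^sub>R x) ` triangle_T p q r s}
      = (\<lambda>(x,y). (int x, int y)) ` ?S"
  proof (rule set_eqI)
    fix z :: "int \<times> int"
    obtain a b where z: "z = (a,b)" by (cases z)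
    have "(real_of_int a, real_of_int b) \<in> (\<lambda>x. real t *\<^sub>R x) ` triangle_T p q r s \<longleftrightarrow>
        a \<ge> 0 \<and> b \<ge> 0 \<and> a * (int q * int r) + b * (int s * int p) \<le> int t * (int p * int r)"
    proof -
      have "real_of_int a * (real q * real r) + real_of_int b * (real s * real p) \<le> real t * (real p * real r)
         \<longleftrightarrow> real_of_int (a * (int q * int r) + b * (int s * int p)) \<le> real_of_int (int t * (int p * int r))"
        by simp
      also have "\<dots> \<longleftrightarrow> a * (int q * int r) + b * (int s * int p) \<le> int t * (int p * int r)"
        by (rule of_int_le_iff)
      finally show ?thesis using mem_scaled[OF assms] by simp
    qed
    also have "\<dots> \<longleftrightarrow> (a,b) \<in> (\<lambda>(x,y). (int x, int y)) ` ?S"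
    proof
      assume h: "a \<ge> 0 \<and> b \<ge> 0 \<and> a * (int q * int r) + b * (int s * int p) \<le> int t * (int p * int r)"
      obtain na where na: "a = int na" using h nonneg_int_cases by metis
      obtain nb where nb: "b = int nb" using h nonneg_int_cases by metis
      have "int (q*r*na + s*p*nb) \<le> int (t*(p*r))" using h unfolding na nb by (simp add: algebra_simps)
      then have "(na, nb) \<in> ?S" by (simp only: of_nat_le_iff) simp
      then show "(a,b) \<in> (\<lambda>(x,y). (int x, int y)) ` ?S" unfolding na nb by force
    next
      assume "(a,b) \<in> (\<lambda>(x,y). (int x, int y)) ` ?S"
      then obtain x y where xy: "a = int x" "b = int y" "q*r*x + s*p*y \<le> t*(p*r)" by auto
      then have "int (q*r*x + s*p*y) \<le> int (t*(p*r))" by (simp only: of_nat_le_iff)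
      then have "int q * int r * int x + int s * int p * int y \<le> int t * (int p * int r)"
        by (simp only: of_nat_add of_nat_mult)
      then show "a \<ge> 0 \<and> b \<ge> 0 \<and> a * (int q * int r) + b * (int s * int p) \<le> int t * (int p * int r)"
        using xy by (simp add: algebra_simps)
    qed
    finally show "z \<in> {z :: int \<times> int. (real_of_int (fst z), real_of_int (snd z)) \<in> (\<lambda>x. real t *\<^sub>R x) ` triangle_T p q r s}
        \<longleftrightarrow> z \<in> (\<lambda>(x,y). (int x, int y)) ` ?S" unfolding z by simp
  qed
  have inj: "inj_on (\<lambda>(x::nat,y::nat). (int x, int y)) ?S" by (auto simp: inj_on_def)
  show ?thesis unfolding lattice_count_def eq card_image[OF inj] fc_def ..
qed

lemma step_sum:
  fixes A B p s k r t :: nat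
  assumes "A + 1 = k*p" "s dvd p" "coprime k s" "p > 0" "s > 0" "A > 0" "B = s*p"
  shows "Dv A B (t*p*r + p*A) = Dv A B (t*p*r)"
proof -
  have bl: "2 * (\<Sum>u\<in>{1..p}. (t*p*r + u*A) mod B) = p*(B - 1)"
    using block[OF assms(1-5), of t r] assms(7) by (simp add: mult.commute)
  have "(\<Sum>u\<in>{1..p}. int B - 1 - 2 * int ((t*p*r + u*A) mod B))
      = int p * (int B - 1) - 2 * int (\<Sum>u\<in>{1..p}. (t*p*r + u*A) mod B)"
    by (simp add: sum_subtractf sum_distrib_left of_nat_sum)
  also have "2 * int (\<Sum>u\<in>{1..p}. (t*p*r + u*A) mod B) = int (p*(B-1))"
    using bl by (metis of_nat_mult of_nat_numeral)
  also have "int (p*(B-1)) = int p * (int B - 1)" using assms(4,5,7) by simp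
  finally have "(\<Sum>u\<in>{1..p}. int B - 1 - 2 * int ((t*p*r + u*A) mod B)) = 0" by simp
  moreover have "B > 0" using assms(4,5,7) by simp
  ultimately show ?thesis using Dv_iter[OF assms(6) \<open>B > 0\<close>, of "t*p*r" p] by simp
qed

lemma Dv_zero_all:
  fixes p q r s :: nat
  assumes "p > 0" and "q > 0" and "r > 0" and "s > 0"
    and "coprime q p" and "coprime s r"
    and "s dvd p" and "p dvd (r * q + 1)" and "gcd ((r * q + 1) div p) s = 1"
    and "q dvd r" and "r dvd (s * p + 1)" and "gcd ((s * p + 1) div r) q = 1"
  shows "Dv (q*r) (s*p) (t*(p*r)) = 0"
proof -
  define A where "A = q*r"
  define B where "B = s*p"
  define C where "C = p*r"
  define k where "k = (r*q+1) div p"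
  define m where "m = (s*p+1) div r"
  have A0: "A > 0" and B0: "B > 0" using assms unfolding A_def B_def by auto
  have Ak: "A + 1 = k*p" unfolding A_def k_def using assms(8) by (simp add: mult.commute)
  have Bm: "B + 1 = m*r" unfolding B_def m_def using assms(11) by (simp add: mult.commute)
  have ck: "coprime k s" using assms(9) unfolding k_def by (simp add: coprime_iff_gcd_eq_1)
  have cm: "coprime m q" using assms(12) unfolding m_def by (simp add: coprime_iff_gcd_eq_1)
  have stepq: "Dv A B (t*C + q*C) = Dv A B (t*C)" for t
  proof -
    have "Dv A B (t*p*r + p*A) = Dv A B (t*p*r)"
      by (rule step_sum[OF Ak assms(7) ck assms(1,4) A0]) (simp add: B_def)
    moreover have "t*p*r + p*A = t*C + q*C" "t*p*r = t*C" unfolding A_def C_def by (simp_all add: ac_simps)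
    ultimately show ?thesis by simp
  qed
  have steps: "Dv A B (t*C + s*C) = Dv A B (t*C)" for t
  proof -
    have "Dv B A (t*r*p + r*B) = Dv B A (t*r*p)"
      by (rule step_sum[OF Bm assms(10) cm assms(3,2) B0]) (simp add: A_def)
    moreover have "t*r*p + r*B = t*C + s*C" "t*r*p = t*C" unfolding B_def C_def by (simp_all add: ac_simps)
    ultimately show ?thesis by (simp add: Dv_swap[of A B])
  qed
  have itq: "Dv A B ((j*q)*C) = Dv A B 0" for j
  proof (induction j)
    case 0 then show ?case by simp
  next
    case (Suc j)
    have "Suc j * q * C = j*q*C + q*C" by (simp add: algebra_simps)
    then show ?case using stepq[of "j*q"] Suc by (simp add: mult.assoc)
  qed
  have its: "Dv A B ((t + i * s) * C) = Dv A B (t * C)" for i :: nat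
  proof (induction i)
    case 0 then show ?case by simp
  next
    case (Suc i)
    have "(t + Suc i * s) * C = (t + i * s) * C + s * C" by (simp add: algebra_simps)
    then show ?case using steps[of "t + i * s"] Suc by simp
  qed
  have D0: "Dv A B 0 = 0" unfolding Dv_def using fc_zero[OF A0 B0] by simp
  have csq: "coprime s q"
  proof -
    obtain b where "r = q*b" using assms(10) by blast
    then show ?thesis using assms(6) by simp
  qed
  obtain x y where xy: "s*x = q*y + gcd s q" using bezout_nat[of s q] assms(4) by auto
  then have xy1: "s*x = q*y + 1" using csq by (simp add: coprime_iff_gcd_eq_1)
  obtain q' where q': "q = Suc q'" using assms(2) by (cases q) auto
  define nn where "nn = x * t * q'"
  have "t + nn * s = (t + t * q' * y) * q"
  proof -
    have "nn * s = t * q' * (s * x)" unfolding nn_def by (simp add: ac_simps)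
    also have "\<dots> = t*q'*(q*y + 1)" using xy1 by simp
    finally show ?thesis unfolding q' by (simp add: algebra_simps)
  qed
  then have "Dv A B (t*C) = Dv A B (((t + t*q'*y)*q)*C)" using its[of nn] by simp
  also have "\<dots> = 0" using itq D0 by simp
  finally show ?thesis unfolding A_def B_def C_def .
qed

theorem corollary1p5:
  fixes p q r s :: nat
  assumes "p > 0" and "q > 0" and "r > 0" and "s > 0"
    and "coprime q p" and "coprime s r"
    and "s dvd p" and "p dvd (r * q + 1)" and "gcd ((r * q + 1) div p) s = 1"
    and "q dvd r" and "r dvd (s * p + 1)" and "gcd ((s * p + 1) div r) q = 1"
  shows "pseudo_integral (triangle_T p q r s)"
proof -
  define A where "A = q*r"
  define B where "B = s*p"
  define C where "C = p*r"
  have A0: "real A > 0" and B0: "real B > 0" using assms unfolding A_def B_def by auto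
  define f where "f = [:1, real C * (real A + real B + 1) / (2 * real A * real B),
                       (real C)^2 / (2 * real A * real B):]"
  show ?thesis unfolding pseudo_integral_def
  proof (intro exI allI impI)
    fix t :: nat assume t: "t > 0"
    have lc: "lattice_count (triangle_T p q r s) t = fc A B (t*C)"
      unfolding A_def B_def C_def using lc_eq[OF assms(1-4) t] .
    have "Dv A B (t*C) = 0" unfolding A_def B_def C_def using Dv_zero_all[OF assms] .
    then have "2*int A*int B*int (fc A B (t*C)) = int (t*C)*(int (t*C) + int A + int B + 1) + 2*int A*int B"
      unfolding Dv_def by linarith
    then have "real_of_int (2*int A*int B*int (fc A B (t*C))) = real_of_int (int (t*C)*(int (t*C) + int A + int B + 1) + 2*int A*int B)"
      by simp
    then have E: "2*real A*real B*real (fc A B (t*C)) = real t * real C*(real t * real C + real A + real B + 1) + 2*real A*real B"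
      by simp
    have "real (fc A B (t*C)) = (real t * real C*(real t * real C + real A + real B + 1) + 2*real A*real B) / (2*real A*real B)"
      using E A0 B0 by (simp add: field_simps)
    also have "\<dots> = poly f (real t)"
      unfolding f_def using A0 B0 by (simp add: field_simps power2_eq_square)
    finally show "real (lattice_count (triangle_T p q r s) t) = poly f (real t)" unfolding lc .
  qed
qed

end
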